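(* Let $n\ge 4$ and let $\mathcal M$ be an IP-SEG* model which is an IP-SEG representation of the chordless cycle $C_n$ and contains at least one interval segment. Then the (unique) permutation arc of $\mathcal M$ consists of at least $2$ and at most $4$ permutation segments.
   Context: Let $L_1$ and $L_2$ be two distinct parallel horizontal lines in the plane. A closed straight line segment is an interval segment if both of its endpoints lie on the same line $L_i$, and a permutation segment if one endpoint lies on $L_1$ and the other on $L_2$. An IP-SEG model is a finite family of interval and permutation segments; its intersection graph has one vertex per segment, adjacent iff the segments intersect. An IP-SEG* model is an IP-SEG model in which all interval segments lie on the same line $L_i$. For $m\ge 3$, $C_m$ is the chordless cycle on $v_1,\dots,v_m$ with $v_i$ adjacent to $v_{i+1}$ (indices mod $m$) and no other edges. An IP-SEG representation of $C_m$ is an IP-SEG model with segments $s(v_1),\dots,s(v_m)$ whose intersection graph is $C_m$ with $s(v_i)$ corresponding to $v_i$. A permutation arc is a maximal sequence of cyclically consecutive segments $s(v_i),\dots,s(v_j)$ that are all permutation segments; an interval arc is defined analogously with interval segments. *)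

theory Defs
  imports "HOL-Analysis.Analysis"
begin

text \<open>Points of the plane are pairs (x,y); the two parallel horizontal lines are
  L1 = {y = c1} and L2 = {y = c2} with c1 \<noteq> c2.\<close>

type_synonym point = "real \<times> real"
type_synonym seg = "point \<times> point"

definition seg_set :: "seg \<Rightarrow> point set" where
  "seg_set s = closed_segment (fst s) (snd s)"

definition on_line :: "real \<Rightarrow> point \<Rightarrow> bool" where
  "on_line c p \<longleftrightarrow> snd p = c"

definition interval_seg_on :: "real \<Rightarrow> seg \<Rightarrow> bool" where
  "interval_seg_on c s \<longleftrightarrow> on_line c (fst s) \<and> on_line c (snd s)"

definition interval_seg :: "real \<Rightarrow> real \<Rightarrow> seg \<Rightarrow> bool" where
  "interval_seg c1 c2 s \<longleftrightarrow> interval_seg_on c1 s \<or> interval_seg_on c2 s"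

definition perm_seg :: "real \<Rightarrow> real \<Rightarrow> seg \<Rightarrow> bool" where
  "perm_seg c1 c2 s \<longleftrightarrow>
     (on_line c1 (fst s) \<and> on_line c2 (snd s)) \<or> (on_line c2 (fst s) \<and> on_line c1 (snd s))"

text \<open>An IP-SEG model with segments s 0, ..., s (n-1) (vertex v_(i+1) is index i).\<close>
definition ip_seg_model :: "real \<Rightarrow> real \<Rightarrow> nat \<Rightarrow> (nat \<Rightarrow> seg) \<Rightarrow> bool" where
  "ip_seg_model c1 c2 n s \<longleftrightarrow> c1 \<noteq> c2 \<and>
     (\<forall>i<n. interval_seg c1 c2 (s i) \<or> perm_seg c1 c2 (s i))"

definition ip_seg_star_model :: "real \<Rightarrow> real \<Rightarrow> nat \<Rightarrow> (nat \<Rightarrow> seg) \<Rightarrow> bool" where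
  "ip_seg_star_model c1 c2 n s \<longleftrightarrow> ip_seg_model c1 c2 n s \<and>
     ((\<forall>i<n. interval_seg c1 c2 (s i) \<longrightarrow> interval_seg_on c1 (s i)) \<or>
      (\<forall>i<n. interval_seg c1 c2 (s i) \<longrightarrow> interval_seg_on c2 (s i)))"

definition cycle_adj :: "nat \<Rightarrow> nat \<Rightarrow> nat \<Rightarrow> bool" where
  "cycle_adj n i j \<longleftrightarrow> i \<noteq> j \<and> (j = Suc i mod n \<or> i = Suc j mod n)"

definition represents_cycle :: "nat \<Rightarrow> (nat \<Rightarrow> seg) \<Rightarrow> bool" where
  "represents_cycle n s \<longleftrightarrow>
     (\<forall>i<n. \<forall>j<n. i \<noteq> j \<longrightarrow>
        (seg_set (s i) \<inter> seg_set (s j) \<noteq> {} \<longleftrightarrow> cycle_adj n i j))"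

text \<open>A permutation arc: a maximal set of cyclically consecutive indices
  {i, i+1, ..., i+k-1} (mod n), k \<ge> 1, all of whose segments are permutation segments.\<close>
definition perm_arc :: "real \<Rightarrow> real \<Rightarrow> nat \<Rightarrow> (nat \<Rightarrow> seg) \<Rightarrow> nat set \<Rightarrow> bool" where
  "perm_arc c1 c2 n s A \<longleftrightarrow>
     (\<exists>i k. i < n \<and> 1 \<le> k \<and> k \<le> n \<and> A = {(i + t) mod n | t. t < k} \<and>
        (\<forall>t<k. perm_seg c1 c2 (s ((i + t) mod n))) \<and>
        (k < n \<longrightarrow> \<not> perm_seg c1 c2 (s ((i + n - 1) mod n)) \<and>
                    \<not> perm_seg c1 c2 (s ((i + k) mod n))))"

end

theory Submission
  imports Defs
begin

definition tp :: "real \<Rightarrow> seg \<Rightarrow> real" where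
  "tp c p = (if snd (fst p) = c then fst (fst p) else fst (snd p))"
definition bt :: "real \<Rightarrow> seg \<Rightarrow> real" where
  "bt c p = (if snd (fst p) = c then fst (snd p) else fst (fst p))"

lemma seg_pair:
  "closed_segment (a1::real, a2::real) (b1, b2) =
     {((1-u)*a1+u*b1, (1-u)*a2+u*b2) | u. 0\<le>u \<and> u\<le>1}"
  by (auto simp: closed_segment_def scaleR_prod_def)

lemma seg_real:
  "closed_segment (a::real) b = {(1-u)*a+u*b | u. 0\<le>u \<and> u\<le>1}"
  by (auto simp: closed_segment_def)

lemma perm_set:
  assumes "c \<noteq> d" "perm_seg c d p"
  shows "seg_set p = closed_segment (tp c p, c) (bt c p, d)"
proof -
  obtain x1 y1 x2 y2 where p: "p = ((x1,y1),(x2,y2))" by (metis prod.collapse)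
  show ?thesis using assms
    by (auto simp: p perm_seg_def on_line_def seg_set_def tp_def bt_def closed_segment_commute)
qed

lemma int_mem:
  assumes "interval_seg_on c a"
  shows "w \<in> seg_set a \<longleftrightarrow> snd w = c \<and> fst w \<in> closed_segment (tp c a) (fst (snd a))"
proof -
  obtain x1 y1 x2 y2 where p: "a = ((x1,y1),(x2,y2))" by (metis prod.collapse)
  have "w \<in> closed_segment (x1,c) (x2,c) \<longleftrightarrow> snd w = c \<and> fst w \<in> closed_segment x1 x2"
    unfolding seg_pair seg_real
    by (cases w) (auto simp: algebra_simps)
  then show ?thesis using assms
    by (auto simp: p interval_seg_on_def on_line_def seg_set_def tp_def)
qed

lemma int_top: "interval_seg_on c a \<Longrightarrow> (tp c a, c) \<in> seg_set a"
  by (simp add: int_mem)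

lemma perm_top: "c \<noteq> d \<Longrightarrow> perm_seg c d p \<Longrightarrow> (tp c p, c) \<in> seg_set p"
  by (simp add: perm_set)

lemma perm_on_c:
  assumes "c \<noteq> d" "perm_seg c d p" "w \<in> seg_set p" "snd w = c"
  shows "w = (tp c p, c)"
proof -
  from assms obtain u where u: "0\<le>u" "u\<le>1"
    "w = ((1-u)*tp c p+u*bt c p, (1-u)*c+u*d)"
    by (auto simp: perm_set seg_pair)
  then have "u*(d-c) = 0" using assms(4) by (simp add: algebra_simps)
  then have "u = 0" using assms(1) by simp
  then show ?thesis using u by simp
qed

lemma perm_perm:
  assumes "c \<noteq> d" "perm_seg c d p" "perm_seg c d q"
  shows "seg_set p \<inter> seg_set q \<noteq> {} \<longleftrightarrow> (tp c p - tp c q) * (bt c p - bt c q) \<le> 0"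
proof
  assume "seg_set p \<inter> seg_set q \<noteq> {}"
  then obtain w where w: "w \<in> seg_set p" "w \<in> seg_set q" by blast
  from w(1) assms obtain u where u: "0\<le>u" "u\<le>1"
    "w = ((1-u)*tp c p+u*bt c p, (1-u)*c+u*d)"
    by (auto simp: perm_set seg_pair)
  from w(2) assms obtain r where v: "0\<le>r" "r\<le>1"
    "w = ((1-r)*tp c q+r*bt c q, (1-r)*c+r*d)"
    by (auto simp: perm_set seg_pair)
  have "(u-r)*(d-c) = 0" using u(3) v(3) by (simp add: algebra_simps)
  then have "u = r" using assms(1) by simp
  define A where "A = tp c p - tp c q"
  define B where "B = bt c p - bt c q"
  have e: "(1-u)*A + u*B = 0" using u(3) v(3) \<open>u = r\<close> by (simp add: A_def B_def algebra_simps)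
  show "A * B \<le> 0"
  proof (rule ccontr)
    assume "\<not> A*B \<le> 0"
    then have "(A > 0 \<and> B > 0) \<or> (A < 0 \<and> B < 0)"
      by (metis linorder_neqE_linordered_idom mult_nonneg_nonpos mult_nonpos_nonneg not_le order_less_imp_le zero_less_mult_iff)
    then show False
    proof
      assume h: "A > 0 \<and> B > 0"
      have "(1-u)*A + u*B > 0"
      proof (cases "u = 0")
        case True then show ?thesis using h by simp
      next
        case False then have "u > 0" using u by simp
        then show ?thesis using h u mult_pos_pos[of u B] mult_nonneg_nonneg[of "1-u" A] by linarith
      qed
      then show False using e by simp
    next
      assume h: "A < 0 \<and> B < 0"
      have "(1-u)*A + u*B < 0"
      proof (cases "u = 0")
        case True then show ?thesis using h by simp
      next
        case False then have "u > 0" using u by simp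
        then show ?thesis using h u mult_pos_neg[of u B] mult_nonneg_nonpos[of "1-u" A] by linarith
      qed
      then show False using e by simp
    qed
  qed
next
  define A where "A = tp c p - tp c q"
  define B where "B = bt c p - bt c q"
  assume "(tp c p - tp c q) * (bt c p - bt c q) \<le> 0"
  then have AB: "A*B \<le> 0" by (simp add: A_def B_def)
  obtain u where u: "0 \<le> u" "u \<le> 1" "(1-u)*A + u*B = 0"
  proof (cases "A = 0")
    case True
    then show ?thesis using that[of 0] by simp
  next
    case False
    define u where "u = A/(A-B)"
    have "0 \<le> u \<and> u \<le> 1 \<and> (1-u)*A + u*B = 0"
    proof (cases "A > 0")
      case True
      then have "B \<le> 0" using AB by (metis mult_pos_pos not_le)
      then have "A - B > 0" using True by simp
      then show ?thesis using True \<open>B \<le> 0\<close> unfolding u_def by (simp add: divide_le_eq_1 field_simps)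
    next
      case f: False
      then have "A < 0" using False by simp
      then have "B \<ge> 0" using AB by (metis mult_neg_neg not_le order_less_imp_le)
      then have "A - B < 0" using \<open>A < 0\<close> by simp
      then show ?thesis using \<open>A < 0\<close> \<open>B \<ge> 0\<close> unfolding u_def
        by (simp add: divide_le_eq_1 field_simps)
    qed
    then show ?thesis using that by blast
  qed
  have "((1-u)*tp c p+u*bt c p, (1-u)*c+u*d) \<in> seg_set p"
    using assms u by (auto simp: perm_set seg_pair)
  moreover have "((1-u)*tp c p+u*bt c p, (1-u)*c+u*d) = ((1-u)*tp c q+u*bt c q, (1-u)*c+u*d)"
    using u(3) by (simp add: A_def B_def algebra_simps)
  moreover have "((1-u)*tp c q+u*bt c q, (1-u)*c+u*d) \<in> seg_set q"
    using assms u by (auto simp: perm_set seg_pair)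
  ultimately show "seg_set p \<inter> seg_set q \<noteq> {}" by auto
qed

lemma int_side:
  assumes "interval_seg_on c a" "(a1,c) \<in> seg_set a" "(a2,c) \<in> seg_set a" "(w,c) \<notin> seg_set a"
  shows "a1 < w \<longleftrightarrow> a2 < w"
  using assms by (auto simp: int_mem closed_segment_eq_real_ivl split: if_splits)

lemma perm_disj_side:
  assumes "c \<noteq> d" "perm_seg c d p" "perm_seg c d q" "seg_set p \<inter> seg_set q = {}"
  shows "(tp c p < tp c q \<and> bt c p < bt c q) \<or> (tp c p > tp c q \<and> bt c p > bt c q)"
proof -
  have "(tp c p - tp c q) * (bt c p - bt c q) > 0" using perm_perm[OF assms(1-3)] assms(4) by auto
  then show ?thesis by (auto simp: zero_less_mult_iff)
qed

lemma side_step: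
  assumes cd: "c \<noteq> d" and z: "perm_seg c d z"
    and x: "interval_seg_on c x \<or> perm_seg c d x"
    and y: "interval_seg_on c y \<or> perm_seg c d y"
    and xy: "seg_set x \<inter> seg_set y \<noteq> {}"
    and xz: "seg_set x \<inter> seg_set z = {}"
    and yz: "seg_set y \<inter> seg_set z = {}"
  shows "tp c x < tp c z \<longleftrightarrow> tp c y < tp c z"
proof -
  have ix: "(tp c z, c) \<notin> seg_set x" using xz perm_top[OF cd z] by blast
  have iy: "(tp c z, c) \<notin> seg_set y" using yz perm_top[OF cd z] by blast
  from xy obtain w where w: "w \<in> seg_set x" "w \<in> seg_set y" by blast
  show ?thesis
  proof (cases "perm_seg c d x")
    case px: True
    show ?thesis
    proof (cases "perm_seg c d y")
      case py: True
      have a: "(tp c x < tp c z \<and> bt c x < bt c z) \<or> (tp c x > tp c z \<and> bt c x > bt c z)"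
        using perm_disj_side[OF cd px z xz] .
      have b: "(tp c y < tp c z \<and> bt c y < bt c z) \<or> (tp c y > tp c z \<and> bt c y > bt c z)"
        using perm_disj_side[OF cd py z yz] .
      have "(tp c x - tp c y) * (bt c x - bt c y) \<le> 0" using perm_perm[OF cd px py] xy by auto
      then have "(tp c x - tp c y \<le> 0 \<and> bt c x - bt c y \<ge> 0) \<or> (tp c x - tp c y \<ge> 0 \<and> bt c x - bt c y \<le> 0)"
        by (auto simp: mult_le_0_iff)
      then show ?thesis using a b by linarith
    next
      case py: False
      then have iy': "interval_seg_on c y" using y by simp
      have "snd w = c" using w(2) iy' int_mem by blast
      then have "w = (tp c x, c)" using perm_on_c[OF cd px w(1)] by simp
      then show ?thesis using int_side[OF iy' _ int_top[OF iy'] iy] w(2) by simp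
    qed
  next
    case px: False
    then have ix': "interval_seg_on c x" using x by simp
    show ?thesis
    proof (cases "perm_seg c d y")
      case py: True
      have "snd w = c" using w(1) ix' int_mem by blast
      then have "w = (tp c y, c)" using perm_on_c[OF cd py w(2)] by simp
      then show ?thesis using int_side[OF ix' int_top[OF ix'] _ ix] w(1) by simp
    next
      case py: False
      then have iy': "interval_seg_on c y" using y by simp
      have "snd w = c" using w(1) ix' int_mem by blast
      then have ww: "w = (fst w, c)" by (cases w) simp
      have 1: "tp c x < tp c z \<longleftrightarrow> fst w < tp c z"
        using int_side[OF ix' int_top[OF ix'] _ ix] w(1) ww by metis
      have 2: "tp c y < tp c z \<longleftrightarrow> fst w < tp c z"
        using int_side[OF iy' int_top[OF iy'] _ iy] w(2) ww by metis
      show ?thesis using 1 2 by simp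
    qed
  qed
qed

lemma mod_cancel1: "t \<le> u \<Longrightarrow> u < (n::nat) \<Longrightarrow> (j+t) mod n = (j+u) mod n \<Longrightarrow> t = u"
proof -
  assume a: "t \<le> u" "u < n" "(j+t) mod n = (j+u) mod n"
  then have "n dvd (j+u) - (j+t)" using mod_eq_dvd_iff_nat[of "j+t" "j+u" n] by simp
  then have "n dvd u - t" by simp
  then show "t = u" using a by (metis diff_is_0_eq dvd_imp_le le_antisym not_gr0 linorder_not_le diff_le_self le_less_trans)
qed

lemma mod_cancel: "t < (n::nat) \<Longrightarrow> u < n \<Longrightarrow> (j+t) mod n = (j+u) mod n \<Longrightarrow> t = u"
  by (metis mod_cancel1 nat_le_linear)

lemma int_not_perm: "c \<noteq> d \<Longrightarrow> interval_seg_on c a \<Longrightarrow> \<not> perm_seg c d a"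
  by (auto simp: interval_seg_on_def perm_seg_def on_line_def)

lemma aux_upper: "((x::real)<a \<longleftrightarrow> b<a) \<Longrightarrow> (a<b \<longleftrightarrow> x<b) \<Longrightarrow> (b<x \<longleftrightarrow> a<x) \<Longrightarrow> a\<noteq>b \<Longrightarrow> x\<noteq>a \<Longrightarrow> x\<noteq>b \<Longrightarrow> False"
  by (cases "a < b"; cases "x < a"; cases "x < b"; simp)
lemma aux_other: "((a::real) < q \<longleftrightarrow> b < q) \<Longrightarrow> (r0 < a \<longleftrightarrow> q < a) \<Longrightarrow> (r0 < a \<longleftrightarrow> b < a) \<Longrightarrow>
   (q < b \<longleftrightarrow> rl < b) \<Longrightarrow> (rl < b \<longleftrightarrow> a < b) \<Longrightarrow> q \<noteq> a \<Longrightarrow> q \<noteq> b \<Longrightarrow> a = b"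
  by (cases "a < b"; cases "q < a"; cases "q < b"; cases "b < a"; simp)

locale cyc =
  fixes c d :: real and n :: nat and s :: "nat \<Rightarrow> seg"
  assumes cd: "c \<noteq> d" and n4: "4 \<le> n"
    and elem: "\<forall>i<n. interval_seg_on c (s i) \<or> perm_seg c d (s i)"
    and rep: "represents_cycle n s"
    and hasint: "\<exists>i<n. interval_seg_on c (s i)"
begin

definition f where "f j = s (j mod n)"
abbreviation P where "P j \<equiv> perm_seg c d (f j)"
abbreviation X where "X j j' \<equiv> seg_set (f j) \<inter> seg_set (f j') \<noteq> {}"

lemma npos: "0 < n" using n4 by simp

lemma elem_f: "interval_seg_on c (f j) \<or> P j"
  using elem npos by (simp add: f_def)

lemma nonperm: "\<not> P j \<Longrightarrow> interval_seg_on c (f j)"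
  using elem_f by blast

lemma f_add_n: "f (j + n) = f j" by (simp add: f_def)
lemma f_shift: "f (j mod n + t) = f (j + t)" by (simp add: f_def mod_add_left_eq)
lemma f_shift2: "f (j + t mod n) = f (j + t)" by (simp add: f_def mod_add_right_eq)

lemma adj:
  assumes "0 < t" "t < n"
  shows "X j (j+t) \<longleftrightarrow> (t = 1 \<or> t = n - 1)"
proof -
  have ne: "j mod n \<noteq> (j+t) mod n"
    using mod_cancel[of 0 n t j] assms by auto
  have "X j (j+t) \<longleftrightarrow> cycle_adj n (j mod n) ((j+t) mod n)"
    using rep ne npos unfolding represents_cycle_def f_def by auto
  also have "\<dots> \<longleftrightarrow> ((j+t) mod n = (j+1) mod n \<or> (j+0) mod n = (j+(t+1)) mod n)"
    using ne by (simp add: cycle_adj_def mod_Suc_eq)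
  also have "\<dots> \<longleftrightarrow> (t = 1 \<or> t = n - 1)"
  proof
    assume "(j+t) mod n = (j+1) mod n \<or> (j+0) mod n = (j+(t+1)) mod n"
    then show "t = 1 \<or> t = n - 1"
    proof
      assume "(j+t) mod n = (j+1) mod n"
      then show ?thesis using mod_cancel[of t n 1 j] assms n4 by simp
    next
      assume h: "(j+0) mod n = (j+(t+1)) mod n"
      show ?thesis
      proof (cases "t + 1 < n")
        case True
        then show ?thesis using mod_cancel[of 0 n "t+1" j] h by simp
      next
        case False
        then show ?thesis using assms by arith
      qed
    qed
  next
    assume "t = 1 \<or> t = n - 1"
    then show "(j+t) mod n = (j+1) mod n \<or> (j+0) mod n = (j+(t+1)) mod n"
    proof
      assume "t = n - 1"
      then have "j + (t+1) = j + n" using npos by simp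
      then show ?thesis by simp
    qed simp
  qed
  finally show ?thesis .
qed

lemma adj1: "X j (Suc j)"
  using adj[of 1 j] n4 by simp

lemma adjlast: "X j (j + (n - 1))"
  using adj[of "n-1" j] n4 by simp

lemma far: "2 \<le> t \<Longrightarrow> t \<le> n - 2 \<Longrightarrow> seg_set (f j) \<inter> seg_set (f (j+t)) = {}"
proof -
  assume "2 \<le> t" "t \<le> n - 2"
  then have h: "0 < t" "t < n" "t \<noteq> 1" "t \<noteq> n - 1" using n4 by auto
  show ?thesis using adj[OF h(1,2), of j] h(3,4) by blast
qed

lemma far': "2 \<le> t \<Longrightarrow> t \<le> n - 2 \<Longrightarrow> seg_set (f (j+t)) \<inter> seg_set (f j) = {}"
  using far by blast

lemma chain:
  assumes z: "perm_seg c d z"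
    and disj: "\<forall>t\<le>m. seg_set (f (j+t)) \<inter> seg_set z = {}"
  shows "tp c (f j) < tp c z \<longleftrightarrow> tp c (f (j+m)) < tp c z"
  using disj
proof (induction m)
  case 0
  then show ?case by simp
next
  case (Suc m)
  then have ih: "tp c (f j) < tp c z \<longleftrightarrow> tp c (f (j+m)) < tp c z" by simp
  have "tp c (f (j+m)) < tp c z \<longleftrightarrow> tp c (f (j+Suc m)) < tp c z"
  proof (rule side_step[OF cd z elem_f elem_f])
    show "X (j+m) (j + Suc m)" using adj1[of "j+m"] by simp
    show "seg_set (f (j + m)) \<inter> seg_set z = {}" using Suc.prems by simp
    show "seg_set (f (j + Suc m)) \<inter> seg_set z = {}" using Suc.prems by blast
  qed
  then show ?case using ih by simp
qed


lemma int_mem2: "interval_seg_on c a \<Longrightarrow>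
   (x, c) \<in> seg_set a \<longleftrightarrow> min (tp c a) (fst (snd a)) \<le> x \<and> x \<le> max (tp c a) (fst (snd a))"
  by (auto simp: int_mem closed_segment_eq_real_ivl)

lemma touch:
  assumes "P a" "\<not> P b" "X a b"
  shows "(tp c (f a), c) \<in> seg_set (f b)"
proof -
  from assms(3) obtain w where w: "w \<in> seg_set (f a)" "w \<in> seg_set (f b)" by blast
  have "snd w = c" using w(2) nonperm[OF assms(2)] int_mem by blast
  then have "w = (tp c (f a), c)" using perm_on_c[OF cd assms(1) w(1)] by simp
  then show ?thesis using w(2) by simp
qed

lemma perm_exists: "\<exists>j. P j"
proof (rule ccontr)
  assume "\<not> (\<exists>j. P j)"
  then have all: "\<And>j. interval_seg_on c (f j)" using nonperm by blast
  define hi where "hi j = max (tp c (f j)) (fst (snd (f j)))" for j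
  have fin: "finite (hi ` {..<n})" "hi ` {..<n} \<noteq> {}" using npos by auto
  have "Min (hi ` {..<n}) \<in> hi ` {..<n}" by (rule Min_in[OF fin])
  then obtain i where i: "i < n" "hi i = Min (hi ` {..<n})" by (metis imageE lessThan_iff)
  have imin: "hi i \<le> hi j" for j
  proof -
    have e: "hi j = hi (j mod n)" by (simp add: hi_def f_def)
    have "j mod n < n" using npos by simp
    then have "Min (hi ` {..<n}) \<le> hi (j mod n)" using fin(1) by (intro Min_le) auto
    then show ?thesis using i e by simp
  qed
  have cl: "(hi i, c) \<in> seg_set (f y)" if "X i y" for y
  proof -
    from that obtain w where w: "w \<in> seg_set (f i)" "w \<in> seg_set (f y)" by blast
    have sw: "snd w = c" using w(1) all int_mem by blast
    then have ww: "w = (fst w, c)" by (cases w) simp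
    have w1: "(fst w, c) \<in> seg_set (f i)" using w(1) ww by simp
    have w2: "(fst w, c) \<in> seg_set (f y)" using w(2) ww by simp
    have a: "fst w \<le> hi i" using w1 int_mem2[OF all, of "fst w" i] unfolding hi_def by blast
    have b: "min (tp c (f y)) (fst (snd (f y))) \<le> fst w" using w2 int_mem2[OF all, of "fst w" y] by blast
    have h: "hi i \<le> max (tp c (f y)) (fst (snd (f y)))" using imin[of y] unfolding hi_def .
    have "min (tp c (f y)) (fst (snd (f y))) \<le> hi i \<and> hi i \<le> max (tp c (f y)) (fst (snd (f y)))"
      using a b h by linarith
    then show ?thesis using int_mem2[OF all, of "hi i" y] by blast
  qed
  have "(hi i, c) \<in> seg_set (f (Suc i))" using cl adj1 by blast
  moreover have "(hi i, c) \<in> seg_set (f (i + (n-1)))" using cl adjlast by blast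
  moreover have e: "Suc i + (n-2) = i + (n-1)" using n4 by simp
  moreover have h: "seg_set (f (Suc i)) \<inter> seg_set (f (Suc i + (n-2))) = {}"
    by (rule far) (use n4 in auto)
  ultimately show False using h[unfolded e] by blast
qed

lemma lower:
  assumes "P i" "\<not> P (i + (n-1))" "\<not> P (Suc i)"
  shows False
proof -
  have a: "(tp c (f i), c) \<in> seg_set (f (Suc i))" using touch[OF assms(1,3) adj1] .
  have b: "(tp c (f i), c) \<in> seg_set (f (i + (n-1)))" using touch[OF assms(1,2) adjlast] .
  have e: "Suc i + (n-2) = i + (n-1)" using n4 by simp
  have h: "seg_set (f (Suc i)) \<inter> seg_set (f (Suc i + (n-2))) = {}"
    by (rule far) (use n4 in auto)
  show False using h[unfolded e] a b by blast
qed

lemma no_other: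
  assumes Pi: "\<forall>t<k. P (i+t)" and k2: "2 \<le> k" and nk: "\<not> P (i+k)" and nl: "\<not> P (i + (n-1))"
    and u: "1 \<le> u" "k + u \<le> n - 2" and q: "P (i+k+u)"
  shows False
proof -
  define pf where "pf = f i"
  define pl where "pl = f (i+(k-1))"
  define q0 where "q0 = f (i+k+u)"
  define r0 where "r0 = f (i+k)"
  define rl where "rl = f (i+(n-1))"
  have Ppf: "perm_seg c d pf" using Pi[rule_format, of 0] k2 by (simp add: pf_def)
  have Ppl: "perm_seg c d pl" using Pi[rule_format, of "k-1"] k2 by (simp add: pl_def)
  have Pq: "perm_seg c d q0" using q by (simp add: q0_def)
  have dq: "\<forall>t\<le>k-1. seg_set (f (i+t)) \<inter> seg_set q0 = {}"
  proof (intro allI impI)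
    fix t assume t: "t \<le> k-1"
    have e: "i + t + (k+u-t) = i+k+u" using t k2 by simp
    have h: "seg_set (f (i+t)) \<inter> seg_set (f (i+t+(k+u-t))) = {}"
      by (rule far) (use t u k2 in auto)
    show "seg_set (f (i+t)) \<inter> seg_set q0 = {}"
      using h[unfolded e] by (simp add: q0_def)
  qed
  have c1: "tp c pf < tp c q0 \<longleftrightarrow> tp c pl < tp c q0"
    using chain[OF Pq dq] by (simp add: pf_def pl_def)
  have ne1: "tp c q0 \<noteq> tp c pf"
    using perm_disj_side[OF cd Ppf Pq] dq[rule_format, of 0] by (auto simp: pf_def)
  have ne2: "tp c q0 \<noteq> tp c pl"
    using perm_disj_side[OF cd Ppl Pq] dq[rule_format, of "k-1"] by (auto simp: pl_def)
  have dpf: "\<forall>t\<le>u. seg_set (f (i+k+t)) \<inter> seg_set pf = {}"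
  proof (intro allI impI)
    fix t assume t: "t \<le> u"
    show "seg_set (f (i+k+t)) \<inter> seg_set pf = {}"
      using far'[of "k+t" i] t u k2 by (simp add: pf_def add.assoc)
  qed
  have c2: "tp c r0 < tp c pf \<longleftrightarrow> tp c q0 < tp c pf"
    using chain[OF Ppf dpf] by (simp add: r0_def q0_def)
  have r0i: "interval_seg_on c r0" using nonperm[OF nk] by (simp add: r0_def)
  have r0pl: "(tp c pl, c) \<in> seg_set r0"
  proof -
    have e: "Suc (i+(k-1)) = i+k" using k2 by simp
    have "P (i+(k-1))" using Ppl by (simp add: pl_def)
    then show ?thesis using touch[of "i+(k-1)" "i+k"] adj1[of "i+(k-1)"] nk e
      by (simp add: pl_def r0_def)
  qed
  have r0pf: "(tp c pf, c) \<notin> seg_set r0"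
    using far[of k i] u k2 perm_top[OF cd Ppf] by (auto simp: pf_def r0_def)
  have e1: "tp c r0 < tp c pf \<longleftrightarrow> tp c pl < tp c pf"
    using int_side[OF r0i int_top[OF r0i] r0pl r0pf] .
  have dpl: "\<forall>t\<le>n-1-k-u. seg_set (f (i+k+u+t)) \<inter> seg_set pl = {}"
  proof (intro allI impI)
    fix t assume t: "t \<le> n-1-k-u"
    have e: "i+(k-1)+(u+1+t) = i+k+u+t" using k2 by simp
    have h: "seg_set (f (i+(k-1)+(u+1+t))) \<inter> seg_set (f (i+(k-1))) = {}"
      by (rule far') (use t u k2 in auto)
    show "seg_set (f (i+k+u+t)) \<inter> seg_set pl = {}"
      using h[unfolded e] by (simp add: pl_def)
  qed
  have c3: "tp c q0 < tp c pl \<longleftrightarrow> tp c rl < tp c pl"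
  proof -
    have e: "i+k+u+(n-1-k-u) = i+(n-1)" using u by simp
    show ?thesis using chain[OF Ppl dpl, unfolded e] by (simp add: rl_def q0_def)
  qed
  have rli: "interval_seg_on c rl" using nonperm[OF nl] by (simp add: rl_def)
  have rlpf: "(tp c pf, c) \<in> seg_set rl"
    using touch[OF _ nl adjlast[of i]] Ppf by (simp add: pf_def rl_def)
  have rlpl: "(tp c pl, c) \<notin> seg_set rl"
  proof
    assume h: "(tp c pl, c) \<in> seg_set rl"
    have "i+(k-1)+(n-k) = i+(n-1)" using k2 u by simp
    then have "seg_set pl \<inter> seg_set rl = {}"
      using far[of "n-k" "i+(k-1)"] k2 u by (simp add: pl_def rl_def)
    then show False using h perm_top[OF cd Ppl] by blast
  qed
  have e2: "tp c rl < tp c pl \<longleftrightarrow> tp c pf < tp c pl"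
    using int_side[OF rli int_top[OF rli] rlpf rlpl] .
  have eq: "tp c pf = tp c pl" by (rule aux_other[OF c1 c2 e1 c3 e2 ne1 ne2])
  have a: "(tp c pf, c) \<in> seg_set r0" using r0pl eq by simp
  have e: "i+k+(n-1-k) = i+(n-1)" using u by simp
  have h: "seg_set (f (i+k)) \<inter> seg_set (f (i+k+(n-1-k))) = {}"
    by (rule far) (use u k2 in auto)
  show False using h[unfolded e] a rlpf unfolding r0_def rl_def by blast
qed

lemma upper:
  assumes Pi: "\<forall>t<k. P (i+t)" and k5: "5 \<le> k" and kn: "k \<le> n - 1"
  shows False
proof -
  define pf where "pf = f i"
  define pl where "pl = f (i+(k-1))"
  define p2 where "p2 = f (i+2)"
  have Ppf: "perm_seg c d pf" using Pi[rule_format, of 0] k5 by (simp add: pf_def)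
  have Ppl: "perm_seg c d pl" using Pi[rule_format, of "k-1"] k5 by (simp add: pl_def)
  have Pp2: "perm_seg c d p2" using Pi[rule_format, of 2] k5 by (simp add: p2_def)
  have d1: "\<forall>t\<le>k-3. seg_set (f (i+2+t)) \<inter> seg_set pf = {}"
  proof (intro allI impI)
    fix t assume t: "t \<le> k-3"
    show "seg_set (f (i+2+t)) \<inter> seg_set pf = {}"
      using far'[of "2+t" i] t k5 kn by (simp add: pf_def add.assoc)
  qed
  have C1: "tp c p2 < tp c pf \<longleftrightarrow> tp c pl < tp c pf"
  proof -
    have e: "i+2+(k-3) = i+(k-1)" using k5 by simp
    show ?thesis using chain[OF Ppf d1, unfolded e] by (simp add: p2_def pl_def)
  qed
  have d2: "\<forall>t\<le>2. seg_set (f (i+t)) \<inter> seg_set pl = {}"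
  proof (intro allI impI)
    fix t :: nat assume t: "t \<le> 2"
    have "i+t+(k-1-t) = i+(k-1)" using t k5 by simp
    then show "seg_set (f (i+t)) \<inter> seg_set pl = {}"
      using far[of "k-1-t" "i+t"] t k5 kn by (simp add: pl_def)
  qed
  have C2: "tp c pf < tp c pl \<longleftrightarrow> tp c p2 < tp c pl"
    using chain[OF Ppl d2] by (simp add: pf_def p2_def)
  have d3: "\<forall>t\<le>n+1-k. seg_set (f (i+(k-1)+t)) \<inter> seg_set p2 = {}"
  proof (intro allI impI)
    fix t assume t: "t \<le> n+1-k"
    have "i+2+(k-3+t) = i+(k-1)+t" using k5 by simp
    then show "seg_set (f (i+(k-1)+t)) \<inter> seg_set p2 = {}"
      using far'[of "k-3+t" "i+2"] t k5 kn by (simp add: p2_def)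
  qed
  have C3: "tp c pl < tp c p2 \<longleftrightarrow> tp c pf < tp c p2"
  proof -
    have "i+(k-1)+(n+1-k) = i+n" using k5 kn by simp
    then show ?thesis using chain[OF Pp2 d3] f_add_n[of i] by (simp add: pl_def pf_def)
  qed
  have n1: "tp c pf \<noteq> tp c pl"
  proof -
    have "i+(k-1) = i + (k-1)" by simp
    have "seg_set pf \<inter> seg_set pl = {}" using far[of "k-1" i] k5 kn by (simp add: pf_def pl_def)
    then show ?thesis using perm_disj_side[OF cd Ppf Ppl] by auto
  qed
  have n2: "tp c p2 \<noteq> tp c pf" using perm_disj_side[OF cd Pp2 Ppf] d1 by (auto simp: p2_def)
  have "seg_set pl \<inter> seg_set p2 = {}" using d2[rule_format, of 2] by (auto simp: p2_def)
  then have n3: "tp c p2 \<noteq> tp c pl" using perm_disj_side[OF cd Ppl Pp2] by auto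
  show False by (rule aux_upper[OF C1 C2 C3 n1 n2 n3])
qed

lemma arc_char:
  assumes kn: "k < n" and k1: "1 \<le> k" and nl: "\<not> P (i + (n-1))" and Pi: "\<forall>t<k. P (i+t)" and nk: "\<not> P (i+k)"
  shows "2 \<le> k \<and> (\<forall>t<n. P (i+t) \<longleftrightarrow> t < k)"
proof -
  have k2: "2 \<le> k"
  proof (rule ccontr)
    assume "\<not> 2 \<le> k"
    then have "k = 1" using k1 by simp
    then have "P i" "\<not> P (Suc i)" using Pi[rule_format, of 0] nk by simp_all
    then show False using lower[of i] nl by simp
  qed
  moreover have "P (i+t) \<longleftrightarrow> t < k" if t: "t < n" for t
  proof (cases "t < k")
    case True then show ?thesis using Pi by simp
  next
    case False
    show ?thesis
    proof (cases "t = k \<or> t = n-1")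
      case True then show ?thesis using nk nl False by auto
    next
      case F2: False
      define u where "u = t - k"
      have tu: "t = k + u" and u1: "1 \<le> u" and u2: "k+u \<le> n-2" using False F2 t by (auto simp: u_def)
      have "\<not> P (i+k+u)" using no_other[OF Pi k2 nk nl u1 u2] by blast
      then show ?thesis using tu False by (simp add: add.assoc)
    qed
  qed
  ultimately show ?thesis by blast
qed

lemma arc_iff:
  "perm_arc c d n s A \<longleftrightarrow> (\<exists>i k. i < n \<and> 1 \<le> k \<and> k \<le> n \<and> A = {(i + t) mod n | t. t < k} \<and>
        (\<forall>t<k. P (i+t)) \<and> (k < n \<longrightarrow> \<not> P (i + (n-1)) \<and> \<not> P (i+k)))"
proof -
  have e: "\<And>i. i + n - 1 = i + (n-1)" using npos by simp
  show ?thesis unfolding perm_arc_def f_def e ..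
qed

lemma card_arc: "k \<le> n \<Longrightarrow> card {(i + t) mod n | t. t < k} = k"
proof -
  assume k: "k \<le> n"
  have "{(i + t) mod n | t. t < k} = (\<lambda>t. (i+t) mod n) ` {..<k}" by auto
  moreover have "inj_on (\<lambda>t. (i+t) mod n) {..<k}"
  proof (rule inj_onI)
    fix x y assume "x \<in> {..<k}" "y \<in> {..<k}" "(i+x) mod n = (i+y) mod n"
    then show "x = y" using mod_cancel[of x n y i] k by simp
  qed
  ultimately show ?thesis by (simp add: card_image)
qed

lemma arc_lt:
  assumes "\<forall>t<n. P (i+t)" "i < n" shows False
proof -
  obtain h where h: "h < n" "interval_seg_on c (s h)" using hasint by blast
  have nh: "\<not> P h" using h int_not_perm[OF cd] by (simp add: f_def)
  have "f (i + (h+n-i) mod n) = f (i + (h+n-i))" by (rule f_shift2)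
  also have "i + (h+n-i) = h + n" using assms(2) by simp
  finally have "f (i + (h+n-i) mod n) = f h" using f_add_n by simp
  moreover have "(h+n-i) mod n < n" using npos by simp
  ultimately show False using assms nh by metis
qed

theorem main:
  "(\<exists>A. perm_arc c d n s A)
       \<and> (\<forall>A B. perm_arc c d n s A \<and> perm_arc c d n s B \<longrightarrow> A = B)
       \<and> (\<forall>A. perm_arc c d n s A \<longrightarrow> 2 \<le> card A \<and> card A \<le> 4)"
proof (rule conjI[OF _ conjI])
  show "\<exists>A. perm_arc c d n s A"
  proof -
    obtain j where j: "P j" using perm_exists by blast
    obtain h where h: "h < n" "interval_seg_on c (s h)" using hasint by blast
    have nh: "\<not> P h" using h int_not_perm[OF cd] by (simp add: f_def)
    have "h + (n - h + j) = j + n" using h by simp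
    then have ex: "\<exists>t. P (h+t)" using j f_add_n[of j] by metis
    define t1 where "t1 = (LEAST t. P (h+t))"
    have Pt1: "P (h+t1)" unfolding t1_def using LeastI_ex[OF ex] .
    have "t1 \<noteq> 0" using Pt1 nh by (metis add_0_right)
    then obtain t2 where t2: "t1 = Suc t2" using not0_implies_Suc by blast
    have nt2: "\<not> P (h+t2)" using not_less_Least[of t2 "\<lambda>t. P (h+t)"] t2 t1_def by simp
    define i0 where "i0 = h + Suc t2"
    have Pi0: "P i0" using Pt1 t2 by (simp add: i0_def)
    have e1: "i0 + (n-1) = (h+t2) + n" using npos by (simp add: i0_def)
    have ni0: "\<not> P (i0 + (n-1))" using nt2 f_add_n[of "h+t2"] e1 by simp
    have ex2: "\<exists>t. \<not> P (i0+t)" using ni0 by blast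
    define k where "k = (LEAST t. \<not> P (i0+t))"
    have nk: "\<not> P (i0+k)" unfolding k_def using LeastI_ex[OF ex2] .
    have kle: "k \<le> n-1" unfolding k_def using ni0 by (rule Least_le)
    have k0: "k \<noteq> 0" using nk Pi0 by (metis add_0_right)
    have Pk: "\<forall>t<k. P (i0+t)" using not_less_Least k_def by blast
    define i where "i = i0 mod n"
    have fi: "\<And>t. f (i + t) = f (i0 + t)" unfolding i_def by (rule f_shift)
    have "perm_arc c d n s {(i + t) mod n | t. t < k}"
      unfolding arc_iff
    proof (intro exI conjI impI)
      show "i < n" using npos by (simp add: i_def)
      show "1 \<le> k" using k0 by simp
      show "k \<le> n" using kle by simp
      show "\<forall>t<k. P (i+t)" using Pk fi by simp
      show "\<not> P (i + (n-1))" using ni0 fi by simp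
      show "\<not> P (i + k)" using nk fi by simp
    qed simp
    then show ?thesis by blast
  qed
next
  show "\<forall>A B. perm_arc c d n s A \<and> perm_arc c d n s B \<longrightarrow> A = B"
  proof (intro allI impI)
  fix A B assume AB: "perm_arc c d n s A \<and> perm_arc c d n s B"
  obtain i1 k1 where a1: "i1 < n" "1 \<le> k1" "k1 \<le> n" "A = {(i1 + t) mod n | t. t < k1}"
    "\<forall>t<k1. P (i1+t)" "k1 < n \<longrightarrow> \<not> P (i1 + (n-1)) \<and> \<not> P (i1+k1)"
    using AB unfolding arc_iff by blast
  obtain i2 k2 where a2: "i2 < n" "1 \<le> k2" "k2 \<le> n" "B = {(i2 + t) mod n | t. t < k2}"
    "\<forall>t<k2. P (i2+t)" "k2 < n \<longrightarrow> \<not> P (i2 + (n-1)) \<and> \<not> P (i2+k2)"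
    using AB unfolding arc_iff by blast
  have k1n: "k1 < n" using arc_lt[of i1] a1 by (metis le_neq_implies_less)
  have k2n: "k2 < n" using arc_lt[of i2] a2 by (metis le_neq_implies_less)
  have ch1: "\<forall>t<n. P (i1+t) \<longleftrightarrow> t < k1" using arc_char[of k1 i1] a1 k1n by blast
  have ch2: "\<forall>t<n. P (i2+t) \<longleftrightarrow> t < k2" using arc_char[of k2 i2] a2 k2n by blast
  define t0 where "t0 = (i2 + n - i1) mod n"
  have t0n: "t0 < n" using npos by (simp add: t0_def)
  have e0: "(i1 + t0) mod n = i2"
  proof -
    have "(i1 + t0) mod n = (i1 + (i2 + n - i1)) mod n" unfolding t0_def by (rule mod_add_right_eq)
    also have "i1 + (i2 + n - i1) = i2 + n" using a1(1) by simp
    finally show ?thesis using a2(1) by simp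
  qed
  have "f (i1 + t0) = f i2" using e0 a2(1) by (simp add: f_def)
  moreover have "P i2" using a2(5) a2(2) by (metis add_0_right less_le_trans zero_less_one)
  ultimately have "P (i1 + t0)" by simp
  then have "t0 < k1" using ch1 t0n by blast
  have ii: "i1 = i2"
  proof (cases "t0 = 0")
    case True then show ?thesis using e0 a1(1) by simp
  next
    case False
    have "(i2 + (n-1)) mod n = ((i1 + t0) mod n + (n-1)) mod n" using e0 by simp
    also have "\<dots> = (i1 + t0 + (n-1)) mod n" by (rule mod_add_left_eq)
    also have "i1 + t0 + (n-1) = (i1 + (t0-1)) + n" using False npos by simp
    finally have "(i2 + (n-1)) mod n = (i1 + (t0-1)) mod n" by simp
    then have "f (i2 + (n-1)) = f (i1 + (t0-1))" by (simp add: f_def)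
    moreover have "P (i1 + (t0-1))" using ch1 \<open>t0 < k1\<close> k1n by simp
    ultimately show ?thesis using a2(6) k2n by simp
  qed
  have kk: "k1 = k2"
  proof (rule ccontr)
    assume "k1 \<noteq> k2"
    then have "k1 < k2 \<or> k2 < k1" by auto
    then show False
    proof
      assume "k1 < k2" then show False using ch1 ch2 ii k2n by (metis order_less_irrefl order.strict_trans)
    next
      assume "k2 < k1" then show False using ch1 ch2 ii k1n by (metis order_less_irrefl order.strict_trans)
    qed
  qed
  show "A = B" using a1(4) a2(4) ii kk by simp
  qed
next
  show "\<forall>A. perm_arc c d n s A \<longrightarrow> 2 \<le> card A \<and> card A \<le> 4"
  proof (intro allI impI)
  fix A assume "perm_arc c d n s A"
  then obtain i k where a: "i < n" "1 \<le> k" "k \<le> n" "A = {(i + t) mod n | t. t < k}"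
    "\<forall>t<k. P (i+t)" "k < n \<longrightarrow> \<not> P (i + (n-1)) \<and> \<not> P (i+k)"
    unfolding arc_iff by blast
  have kn: "k < n" using arc_lt[of i] a by (metis le_neq_implies_less)
  have k2: "2 \<le> k" using arc_char[of k i] a kn by blast
  have k4: "k \<le> 4"
  proof (rule ccontr)
    assume "\<not> k \<le> 4"
    then have "5 \<le> k" by simp
    moreover have "k \<le> n - 1" using kn by simp
    ultimately show False using upper[of k i] a(5) by blast
  qed
  have "card A = k" using card_arc[OF a(3)] a(4) by simp
  then show "2 \<le> card A \<and> card A \<le> 4" using k2 k4 by simp
  qed
qed

end


lemma perm_sym: "perm_seg c1 c2 = perm_seg c2 c1"
  by (rule ext) (auto simp: perm_seg_def)

lemma arc_sym: "perm_arc c1 c2 = perm_arc c2 c1"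
  by (intro ext) (simp only: perm_arc_def perm_sym[of c1 c2])

theorem mainTheorem7:
  fixes c1 c2 :: real and n :: nat and s :: "nat \<Rightarrow> seg"
  assumes "n \<ge> 4"
    and "ip_seg_star_model c1 c2 n s"
    and "represents_cycle n s"
    and "\<exists>i<n. interval_seg c1 c2 (s i)"
  shows "(\<exists>A. perm_arc c1 c2 n s A)
       \<and> (\<forall>A B. perm_arc c1 c2 n s A \<and> perm_arc c1 c2 n s B \<longrightarrow> A = B)
       \<and> (\<forall>A. perm_arc c1 c2 n s A \<longrightarrow> 2 \<le> card A \<and> card A \<le> 4)"
proof -
  have cd: "c1 \<noteq> c2" and el: "\<forall>i<n. interval_seg c1 c2 (s i) \<or> perm_seg c1 c2 (s i)"
    using assms(2) by (auto simp: ip_seg_star_model_def ip_seg_model_def)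
  from assms(2) have
    "(\<forall>i<n. interval_seg c1 c2 (s i) \<longrightarrow> interval_seg_on c1 (s i)) \<or>
     (\<forall>i<n. interval_seg c1 c2 (s i) \<longrightarrow> interval_seg_on c2 (s i))"
    by (simp add: ip_seg_star_model_def)
  then show ?thesis
  proof
    assume h: "\<forall>i<n. interval_seg c1 c2 (s i) \<longrightarrow> interval_seg_on c1 (s i)"
    interpret cyc c1 c2 n s
    proof
      show "c1 \<noteq> c2" by (fact cd)
      show "4 \<le> n" using assms(1) .
      show "\<forall>i<n. interval_seg_on c1 (s i) \<or> perm_seg c1 c2 (s i)" using el h by blast
      show "represents_cycle n s" by (fact assms(3))
      show "\<exists>i<n. interval_seg_on c1 (s i)" using assms(4) h by blast
    qed
    show ?thesis by (rule main)
  next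
    assume h: "\<forall>i<n. interval_seg c1 c2 (s i) \<longrightarrow> interval_seg_on c2 (s i)"
    interpret cyc c2 c1 n s
    proof
      show "c2 \<noteq> c1" using cd by simp
      show "4 \<le> n" using assms(1) .
      show "\<forall>i<n. interval_seg_on c2 (s i) \<or> perm_seg c2 c1 (s i)" using el h perm_sym[of c1 c2] by metis
      show "represents_cycle n s" by (fact assms(3))
      show "\<exists>i<n. interval_seg_on c2 (s i)" using assms(4) h by blast
    qed
    show ?thesis using main unfolding arc_sym[of c2 c1] .
  qed
qed

end
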